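(* Let $L$ be a finite set of axis-aligned line segments in the plane, and let $\mathcal{C}$ be the collection of associated subsets of the rectangular cells of the arrangement of $L$. For any three line segments $\ell, \ell', \ell'' \in L$, there are at most two subsets in $\mathcal{C}$ containing all three of $\ell, \ell', \ell''$.
   Context: A cell of the arrangement of $L$ is a maximal connected region of the plane not intersected by any segment of $L$. A cell is rectangular if its boundary is formed by exactly four segments of $L$; its associated subset is the set $\{\ell_1,\ell_2,\ell_3,\ell_4\}\subseteq L$ of these four bounding segments. $\mathcal{C}$ is the collection of associated subsets of all rectangular cells. *)

theory Defs
  imports "HOL-Analysis.Analysis"
begin

type_synonym point = "real \<times> real"

definition axis_segment :: "point set \<Rightarrow> bool" where
  "axis_segment s \<longleftrightarrow>
     (\<exists>a b. a \<noteq> b \<and> (fst a = fst b \<or> snd a = snd b) \<and> s = closed_segment a b)"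

definition cells :: "point set set \<Rightarrow> point set set" where
  "cells L = components (- \<Union>L)"

text \<open>Segments that contribute a (non-degenerate) part of the boundary of a cell.\<close>
definition bounding_segments :: "point set set \<Rightarrow> point set \<Rightarrow> point set set" where
  "bounding_segments L C = {l \<in> L. infinite (l \<inter> frontier C)}"

definition rectangular_cell :: "point set set \<Rightarrow> point set \<Rightarrow> bool" where
  "rectangular_cell L C \<longleftrightarrow>
     C \<in> cells L \<and> bounded C \<and> card (bounding_segments L C) = 4 \<and>
     frontier C \<subseteq> \<Union>(bounding_segments L C)"

definition assoc_subsets :: "point set set \<Rightarrow> point set set set" where
  "assoc_subsets L = {bounding_segments L C | C. rectangular_cell L C}"

end

theory Submission
  imports Defs
begin

definition vert :: "point set \<Rightarrow> real \<Rightarrow> bool" where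
  "vert s x \<longleftrightarrow> (\<exists>a b. a \<noteq> b \<and> fst a = x \<and> fst b = x \<and> s = closed_segment a b)"
definition horiz :: "point set \<Rightarrow> real \<Rightarrow> bool" where
  "horiz s y \<longleftrightarrow> (\<exists>a b. a \<noteq> b \<and> snd a = y \<and> snd b = y \<and> s = closed_segment a b)"

lemma axis_cases: "axis_segment s \<Longrightarrow> (\<exists>x. vert s x) \<or> (\<exists>y. horiz s y)"
  unfolding axis_segment_def vert_def horiz_def by metis

lemma vert_fst: "vert s x \<Longrightarrow> q \<in> s \<Longrightarrow> fst q = x"
  unfolding vert_def by (auto simp: in_segment algebra_simps)

lemma horiz_snd: "horiz s y \<Longrightarrow> q \<in> s \<Longrightarrow> snd q = y"
  unfolding horiz_def by (auto simp: in_segment algebra_simps)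

lemma vert_ne: "vert s x \<Longrightarrow> s \<noteq> {}"
  unfolding vert_def by auto
lemma horiz_ne: "horiz s x \<Longrightarrow> s \<noteq> {}"
  unfolding horiz_def by auto

lemma vert_not_horiz: "vert s x \<Longrightarrow> \<not> horiz s y"
proof
  assume "vert s x" "horiz s y"
  then obtain a b where ab: "a \<noteq> b" "fst a = x" "fst b = x" "s = closed_segment a b"
    unfolding vert_def by auto
  have "snd a = y" "snd b = y" using horiz_snd[OF \<open>horiz s y\<close>] ab by auto
  with ab show False by (simp add: prod_eq_iff)
qed

lemma vert_unique: "vert s x \<Longrightarrow> vert s x' \<Longrightarrow> x = x'"
  using vert_ne vert_fst by blast
lemma horiz_unique: "horiz s x \<Longrightarrow> horiz s x' \<Longrightarrow> x = x'"
  using horiz_ne horiz_snd by blast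

lemma avoid: assumes "finite X" "(a::real) < b" shows "\<exists>x. a < x \<and> x < b \<and> x \<notin> X"
proof -
  define m where "m = Min (insert b {x\<in>X. a < x})"
  have fin: "finite (insert b {x\<in>X. a < x})" using assms by auto
  have "m > a" unfolding m_def using fin assms by (subst Min_gr_iff) auto
  have "m \<le> b" unfolding m_def using fin by simp
  have "(a+m)/2 \<notin> X"
  proof
    assume "(a+m)/2 \<in> X"
    hence "(a+m)/2 \<in> insert b {x\<in>X. a < x}" using \<open>m > a\<close> by auto
    hence "m \<le> (a+m)/2" unfolding m_def using fin by (intro Min_le) auto
    thus False using \<open>m > a\<close> by simp
  qed
  thus ?thesis using \<open>m > a\<close> \<open>m \<le> b\<close> by (intro exI[of _ "(a+m)/2"]) auto
qed

lemma near: fixes C :: "point set" assumes "open C" "p \<in> C"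
  shows "\<exists>e>0. \<forall>x y. \<bar>x - fst p\<bar> < e \<longrightarrow> \<bar>y - snd p\<bar> < e \<longrightarrow> (x,y) \<in> C"
proof -
  obtain r where r: "r > 0" "ball p r \<subseteq> C" using assms open_contains_ball by blast
  show ?thesis
  proof (intro exI[of _ "r/2"] conjI allI impI)
    fix x y assume h: "\<bar>x - fst p\<bar> < r/2" "\<bar>y - snd p\<bar> < r/2"
    have "dist p (x,y) \<le> \<bar>fst p - x\<bar> + \<bar>snd p - y\<bar>"
    proof -
      have "dist p (x,y) = sqrt ((fst p - x)^2 + (snd p - y)^2)"
        by (cases p) (simp add: dist_Pair_Pair dist_real_def)
      thus ?thesis using sqrt_sum_squares_le_sum_abs[of "fst p - x" "snd p - y"] by simp
    qed
    hence "dist p (x,y) < r" using h by (simp add: abs_minus_commute)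
    thus "(x,y) \<in> C" using r by auto
  qed (use r in auto)
qed

lemma exit_dir: fixes C :: "point set" assumes "open C" "bounded C" "p \<in> C" "w \<noteq> 0"
  shows "\<exists>t>0. p + t *\<^sub>R w \<in> frontier C"
proof -
  obtain B where B: "\<And>z. z \<in> C \<Longrightarrow> norm z \<le> B" using assms(2) bounded_iff by blast
  define R where "R = (norm p + \<bar>B\<bar> + 1) / norm w"
  have R: "R > 0" unfolding R_def using norm_ge_zero[of p] abs_ge_zero[of B] assms(4)
    by (intro divide_pos_pos) (linarith, simp)
  define z where "z = p + R *\<^sub>R w"
  have "norm (R *\<^sub>R w) = norm p + \<bar>B\<bar> + 1" unfolding R_def using assms(4) by simp
  moreover have "norm (R *\<^sub>R w) - norm (-p) \<le> norm (R *\<^sub>R w - (-p))" by (rule norm_triangle_ineq2)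
  ultimately have "norm z > B" unfolding z_def by (simp add: add.commute)
  hence "z \<notin> C" using B by (meson not_le)
  have "closed_segment p z \<inter> frontier C \<noteq> {}"
    apply (rule connected_Int_frontier)
    using \<open>z \<notin> C\<close> assms(3) by auto
  then obtain q where q: "q \<in> closed_segment p z" "q \<in> frontier C" by auto
  then obtain u where u: "0 \<le> u" "u \<le> 1" "q = (1 - u) *\<^sub>R p + u *\<^sub>R z" by (auto simp: in_segment)
  have "q \<noteq> p" using q(2) assms(1,3) by (auto simp: frontier_def interior_open)
  hence "u \<noteq> 0" using u by auto
  have "q = p + (u*R) *\<^sub>R w" using u(3) unfolding z_def by (simp add: algebra_simps)
  thus ?thesis using q(2) \<open>u\<noteq>0\<close> u R by (intro exI[of _ "u*R"]) auto
qed

lemma dir_hit: assumes "q \<in> frontier C" "frontier C \<subseteq> \<Union>S" "\<forall>s\<in>S. axis_segment s"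
  shows "\<exists>s\<in>S. vert s (fst q) \<or> horiz s (snd q)"
proof -
  obtain s where s: "s \<in> S" "q \<in> s" using assms(1,2) by auto
  show ?thesis using axis_cases[of s] assms(3) s vert_fst[of s _ q] horiz_snd[of s _ q] by blast
qed

lemma generic_pt: fixes C :: "point set"
  assumes "open C" "p \<in> C" "finite X" "finite Y"
  shows "\<exists>q\<in>C. fst q \<notin> X \<and> snd q \<notin> Y \<and> fst q < fst p \<and> snd q < snd p"
    "\<exists>q\<in>C. fst q \<notin> X \<and> snd q \<notin> Y \<and> fst q > fst p \<and> snd q > snd p"
proof -
  obtain e where e: "e > 0" "\<And>x y. \<bar>x - fst p\<bar> < e \<Longrightarrow> \<bar>y - snd p\<bar> < e \<Longrightarrow> (x,y) \<in> C"
    using near[OF assms(1,2)] by blast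
  obtain x where x: "fst p - e < x" "x < fst p" "x \<notin> X" using avoid[OF assms(3), of "fst p - e" "fst p"] e by auto
  obtain y where y: "snd p - e < y" "y < snd p" "y \<notin> Y" using avoid[OF assms(4), of "snd p - e" "snd p"] e by auto
  have "(x,y) \<in> C" using e(2)[of x y] x y by auto
  thus "\<exists>q\<in>C. fst q \<notin> X \<and> snd q \<notin> Y \<and> fst q < fst p \<and> snd q < snd p" using x y by force
  obtain x' where x': "fst p < x'" "x' < fst p + e" "x' \<notin> X" using avoid[OF assms(3), of "fst p" "fst p + e"] e by auto
  obtain y' where y': "snd p < y'" "y' < snd p + e" "y' \<notin> Y" using avoid[OF assms(4), of "snd p" "snd p + e"] e by auto
  have "(x',y') \<in> C" using e(2)[of x' y'] x' y' by auto
  thus "\<exists>q\<in>C. fst q \<notin> X \<and> snd q \<notin> Y \<and> fst q > fst p \<and> snd q > snd p" using x' y' by force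
qed

lemma rect_box:
  assumes fin: "finite L" and ax: "\<forall>s\<in>L. axis_segment s" and rc: "rectangular_cell L C"
  shows "\<exists>x1 x2 y1 y2 v1 v2 h1 h2. x1 < x2 \<and> y1 < y2 \<and> bounding_segments L C = {v1,v2,h1,h2} \<and>
     vert v1 x1 \<and> vert v2 x2 \<and> horiz h1 y1 \<and> horiz h2 y2 \<and>
     C = {p. x1 < fst p \<and> fst p < x2 \<and> y1 < snd p \<and> snd p < y2}"
proof -
  define S where "S = bounding_segments L C"
  have Ccomp: "C \<in> components (- \<Union>L)" and bC: "bounded C" and c4: "card S = 4"
    and fr: "frontier C \<subseteq> \<Union>S"
    using rc unfolding rectangular_cell_def cells_def S_def by auto
  have SL: "S \<subseteq> L" unfolding bounding_segments_def S_def by auto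
  have axS: "\<forall>s\<in>S. axis_segment s" using SL ax by auto
  have closedU: "closed (\<Union>L)" using fin ax by (auto intro!: closed_Union simp: axis_segment_def)
  have oC: "open C" using open_components[OF open_Compl[OF closedU] Ccomp] .
  have neC: "C \<noteq> {}" using in_components_nonempty[OF Ccomp] .
  have finS: "finite S" using c4 card.infinite by force
  define X where "X = {x. \<exists>s\<in>S. vert s x}"
  define Y where "Y = {y. \<exists>s\<in>S. horiz s y}"
  define V where "V = {s\<in>S. \<exists>x. vert s x}"
  define H where "H = {s\<in>S. \<exists>y. horiz s y}"
  define vx where "vx s = fst (SOME p. p \<in> s)" for s :: "point set"
  define hy where "hy s = snd (SOME p. p \<in> s)" for s :: "point set"
  have vx: "vx s = x" if "vert s x" for s x
    unfolding vx_def using that vert_ne[OF that] by (metis some_in_eq vert_fst)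
  have hy: "hy s = y" if "horiz s y" for s y
    unfolding hy_def using that horiz_ne[OF that] by (metis some_in_eq horiz_snd)
  have XV: "X = vx ` V" unfolding X_def V_def using vx by auto
  have YH: "Y = hy ` H" unfolding Y_def H_def using hy by auto
  have finV: "finite V" "finite H" using finS unfolding V_def H_def by auto
  have finX: "finite X" "finite Y" using XV YH finV by auto
  have gen: "(\<exists>x\<in>X. x < fst p) \<and> (\<exists>x\<in>X. fst p < x) \<and> (\<exists>y\<in>Y. y < snd p) \<and> (\<exists>y\<in>Y. snd p < y)"
    if p: "p \<in> C" "fst p \<notin> X" "snd p \<notin> Y" for p
  proof (intro conjI)
    obtain t where t: "t > 0" "p + t *\<^sub>R (1,0) \<in> frontier C" using exit_dir[OF oC bC p(1), of "(1,0)"] by (auto simp: zero_prod_def)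
    then obtain s where "s \<in> S" "vert s (fst p + t) \<or> horiz s (snd p)" using dir_hit[OF t(2) fr axS] by auto
    thus "\<exists>x\<in>X. fst p < x" using p t unfolding X_def Y_def by auto
  next
    obtain t where t: "t > 0" "p + t *\<^sub>R (-1,0) \<in> frontier C" using exit_dir[OF oC bC p(1), of "(-1,0)"] by (auto simp: zero_prod_def)
    then obtain s where "s \<in> S" "vert s (fst p - t) \<or> horiz s (snd p)" using dir_hit[OF t(2) fr axS] by auto
    thus "\<exists>x\<in>X. x < fst p" using p t unfolding X_def Y_def by auto
  next
    obtain t where t: "t > 0" "p + t *\<^sub>R (0,1) \<in> frontier C" using exit_dir[OF oC bC p(1), of "(0,1)"] by (auto simp: zero_prod_def)
    then obtain s where "s \<in> S" "vert s (fst p) \<or> horiz s (snd p + t)" using dir_hit[OF t(2) fr axS] by auto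
    thus "\<exists>y\<in>Y. snd p < y" using p t unfolding X_def Y_def by auto
  next
    obtain t where t: "t > 0" "p + t *\<^sub>R (0,-1) \<in> frontier C" using exit_dir[OF oC bC p(1), of "(0,-1)"] by (auto simp: zero_prod_def)
    then obtain s where "s \<in> S" "vert s (fst p) \<or> horiz s (snd p - t)" using dir_hit[OF t(2) fr axS] by auto
    thus "\<exists>y\<in>Y. y < snd p" using p t unfolding X_def Y_def by auto
  qed
  obtain p00 where "p00 \<in> C" using neC by auto
  then obtain p0 where p0: "p0 \<in> C" "fst p0 \<notin> X" "snd p0 \<notin> Y"
    using generic_pt(1)[OF oC _ finX] by blast
  have "card X \<ge> 2"
  proof -
    obtain a b where "a \<in> X" "b \<in> X" "a < fst p0" "fst p0 < b" using gen[OF p0] by auto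
    hence "{a,b} \<subseteq> X" "a \<noteq> b" by auto
    thus ?thesis using card_mono[OF finX(1), of "{a,b}"] by simp
  qed
  moreover have "card Y \<ge> 2"
  proof -
    obtain a b where "a \<in> Y" "b \<in> Y" "a < snd p0" "snd p0 < b" using gen[OF p0] by auto
    hence "{a,b} \<subseteq> Y" "a \<noteq> b" by auto
    thus ?thesis using card_mono[OF finX(2), of "{a,b}"] by simp
  qed
  moreover have "card X \<le> card V" "card Y \<le> card H" using XV YH card_image_le finV by auto
  moreover have SVH: "S = V \<union> H" using axS axis_cases unfolding V_def H_def by auto
  moreover have "V \<inter> H = {}" unfolding V_def H_def using vert_not_horiz by auto
  ultimately have "card V + card H = 4" using c4 card_Un_disjoint[OF finV] by simp
  with \<open>card X \<ge> 2\<close> \<open>card Y \<ge> 2\<close> \<open>card X \<le> card V\<close> \<open>card Y \<le> card H\<close>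
  have cards: "card X = 2" "card Y = 2" "card V = 2" "card H = 2" by linarith+
  obtain a b where ab: "X = {a,b}" "a \<noteq> b" using cards(1) card_2_iff by metis
  define x1 where "x1 = min a b"
  define x2 where "x2 = max a b"
  have X12: "X = {x1,x2}" "x1 < x2" using ab unfolding x1_def x2_def by (auto simp: min_def max_def)
  obtain c d where cd: "Y = {c,d}" "c \<noteq> d" using cards(2) card_2_iff by metis
  define y1 where "y1 = min c d"
  define y2 where "y2 = max c d"
  have Y12: "Y = {y1,y2}" "y1 < y2" using cd unfolding y1_def y2_def by (auto simp: min_def max_def)
  obtain v1 where v1: "v1 \<in> S" "vert v1 x1" using X12 unfolding X_def by blast
  obtain v2 where v2: "v2 \<in> S" "vert v2 x2" using X12 unfolding X_def by blast
  obtain h1 where h1: "h1 \<in> S" "horiz h1 y1" using Y12 unfolding Y_def by blast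
  obtain h2 where h2: "h2 \<in> S" "horiz h2 y2" using Y12 unfolding Y_def by blast
  have "v1 \<noteq> v2" using v1 v2 X12 vert_unique by force
  hence "V = {v1,v2}" using v1 v2 cards(3) finV unfolding V_def
    by (metis (no_types, lifting) V_def card_2_iff card_subset_eq empty_subsetI insert_subset mem_Collect_eq)
  moreover have "h1 \<noteq> h2" using h1 h2 Y12 horiz_unique by force
  hence "H = {h1,h2}" using h1 h2 cards(4) finV unfolding H_def
    by (metis (no_types, lifting) H_def card_2_iff card_subset_eq empty_subsetI insert_subset mem_Collect_eq)
  ultimately have Seq: "S = {v1,v2,h1,h2}" using SVH by auto
  define B where "B = {p. x1 < fst p \<and> fst p < x2 \<and> y1 < snd p \<and> snd p < y2}"
  have genB: "p \<in> B" if "p \<in> C" "fst p \<notin> X" "snd p \<notin> Y" for p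
    using gen[OF that] X12 Y12 unfolding B_def by auto
  have CB: "C \<subseteq> B"
  proof
    fix p assume p: "p \<in> C"
    obtain q where q: "q \<in> C" "fst q \<notin> X" "snd q \<notin> Y" "fst q < fst p" "snd q < snd p"
      using generic_pt(1)[OF oC p finX] by blast
    obtain q' where q': "q' \<in> C" "fst q' \<notin> X" "snd q' \<notin> Y" "fst q' > fst p" "snd q' > snd p"
      using generic_pt(2)[OF oC p finX] by blast
    show "p \<in> B" using genB[OF q(1-3)] genB[OF q'(1-3)] q q' unfolding B_def by auto
  qed
  have "C = B"
  proof (rule ccontr)
    assume "C \<noteq> B"
    hence "B - C \<noteq> {}" using CB by auto
    moreover have "B \<inter> C \<noteq> {}" using CB neC by auto
    moreover have "connected B"
    proof -
      have "B = {x1<..<x2} \<times> {y1<..<y2}" unfolding B_def by auto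
      thus ?thesis by (simp add: convex_connected convex_Times)
    qed
    ultimately obtain q where q: "q \<in> B" "q \<in> frontier C" using connected_Int_frontier by blast
    then obtain s where s: "s \<in> S" "q \<in> s" using fr by auto
    hence "fst q = x1 \<or> fst q = x2 \<or> snd q = y1 \<or> snd q = y2"
      using Seq vert_fst[OF v1(2)] vert_fst[OF v2(2)] horiz_snd[OF h1(2)] horiz_snd[OF h2(2)] by blast
    thus False using q(1) unfolding B_def by auto
  qed
  thus ?thesis using X12(2) Y12(2) Seq v1(2) v2(2) h1(2) h2(2) unfolding S_def B_def
    by (intro exI[of _ x1] exI[of _ x2] exI[of _ y1] exI[of _ y2] exI[of _ v1] exI[of _ v2] exI[of _ h1] exI[of _ h2] conjI) (assumption+)
qed

lemma tri_h:
  assumes fin: "finite L" and ax: "\<forall>s\<in>L. axis_segment s" and rc: "rectangular_cell L C"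
    and a: "horiz a c" and b: "horiz b c'" and e: "vert e d" and ab: "a \<noteq> b"
    and m: "a \<in> bounding_segments L C" "b \<in> bounding_segments L C" "e \<in> bounding_segments L C"
  shows "\<exists>x1 x2. x1 < x2 \<and> (x1 = d \<or> x2 = d) \<and>
     C = {p. x1 < fst p \<and> fst p < x2 \<and> min c c' < snd p \<and> snd p < max c c'}"
proof -
  obtain x1 x2 y1 y2 v1 v2 h1 h2 where r: "x1 < x2" "y1 < y2" "bounding_segments L C = {v1,v2,h1,h2}"
     "vert v1 x1" "vert v2 x2" "horiz h1 y1" "horiz h2 y2"
     "C = {p. x1 < fst p \<and> fst p < x2 \<and> y1 < snd p \<and> snd p < y2}"
    using rect_box[OF fin ax rc] by (elim exE conjE) (rule that; assumption)
  have "a \<noteq> v1" "a \<noteq> v2" "b \<noteq> v1" "b \<noteq> v2" "e \<noteq> h1" "e \<noteq> h2"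
    using a b vert_not_horiz[OF r(4)] vert_not_horiz[OF r(5)] vert_not_horiz[OF e] r(6,7) by blast+
  hence A: "a = h1 \<or> a = h2" "b = h1 \<or> b = h2" "e = v1 \<or> e = v2" using m r(3) by auto
  have D: "d = x1 \<or> d = x2" using A(3) vert_unique[of e d x1] vert_unique[of e d x2] e r(4,5) by auto
  have Y: "min c c' = y1 \<and> max c c' = y2"
  proof (cases "a = h1")
    case True
    hence "b = h2" using A ab by auto
    thus ?thesis using True horiz_unique[of a c y1] horiz_unique[of b "c'" y2] a b r(2,6,7) by auto
  next
    case False
    hence "a = h2" "b = h1" using A ab by auto
    thus ?thesis using horiz_unique[of a c y2] horiz_unique[of b "c'" y1] a b r(2,6,7) by auto
  qed
  show ?thesis using r(1,8) D Y by (intro exI[of _ x1] exI[of _ x2]) auto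
qed

lemma tri_v:
  assumes fin: "finite L" and ax: "\<forall>s\<in>L. axis_segment s" and rc: "rectangular_cell L C"
    and a: "vert a c" and b: "vert b c'" and e: "horiz e d" and ab: "a \<noteq> b"
    and m: "a \<in> bounding_segments L C" "b \<in> bounding_segments L C" "e \<in> bounding_segments L C"
  shows "\<exists>y1 y2. y1 < y2 \<and> (y1 = d \<or> y2 = d) \<and>
     C = {p. min c c' < fst p \<and> fst p < max c c' \<and> y1 < snd p \<and> snd p < y2}"
proof -
  obtain x1 x2 y1 y2 v1 v2 h1 h2 where r: "x1 < x2" "y1 < y2" "bounding_segments L C = {v1,v2,h1,h2}"
     "vert v1 x1" "vert v2 x2" "horiz h1 y1" "horiz h2 y2"
     "C = {p. x1 < fst p \<and> fst p < x2 \<and> y1 < snd p \<and> snd p < y2}"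
    using rect_box[OF fin ax rc] by (elim exE conjE) (rule that; assumption)
  have "a \<noteq> h1" "a \<noteq> h2" "b \<noteq> h1" "b \<noteq> h2" "e \<noteq> v1" "e \<noteq> v2"
    using e vert_not_horiz[OF r(4)] vert_not_horiz[OF r(5)] vert_not_horiz[OF a] vert_not_horiz[OF b] r(6,7) by blast+
  hence A: "a = v1 \<or> a = v2" "b = v1 \<or> b = v2" "e = h1 \<or> e = h2" using m r(3) by auto
  have D: "d = y1 \<or> d = y2" using A(3) horiz_unique[of e d y1] horiz_unique[of e d y2] e r(6,7) by auto
  have Y: "min c c' = x1 \<and> max c c' = x2"
  proof (cases "a = v1")
    case True
    hence "b = v2" using A ab by auto
    thus ?thesis using True vert_unique[of a c x1] vert_unique[of b "c'" x2] a b r(1,4,5) by auto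
  next
    case False
    hence "a = v2" "b = v1" using A ab by auto
    thus ?thesis using vert_unique[of a c x2] vert_unique[of b "c'" x1] a b r(1,4,5) by auto
  qed
  show ?thesis using r(2,8) D Y by (intro exI[of _ y1] exI[of _ y2]) auto
qed

lemma no3_v:
  assumes fin: "finite L" and ax: "\<forall>s\<in>L. axis_segment s" and rc: "rectangular_cell L C"
    and "vert a c" "vert b c'" "vert e d" "a \<noteq> b" "a \<noteq> e" "b \<noteq> e"
    and m: "a \<in> bounding_segments L C" "b \<in> bounding_segments L C" "e \<in> bounding_segments L C"
  shows False
proof -
  obtain x1 x2 y1 y2 v1 v2 h1 h2 where r: "bounding_segments L C = {v1,v2,h1,h2}"
     "horiz h1 y1" "horiz h2 y2"
    using rect_box[OF fin ax rc] by (elim exE conjE) (rule that; assumption)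
  have "a \<noteq> h1" "a \<noteq> h2" "b \<noteq> h1" "b \<noteq> h2" "e \<noteq> h1" "e \<noteq> h2"
    using vert_not_horiz[OF assms(4)] vert_not_horiz[OF assms(5)] vert_not_horiz[OF assms(6)] r(2,3) by blast+
  thus False using m r(1) assms(7-9) by auto
qed

lemma no3_h:
  assumes fin: "finite L" and ax: "\<forall>s\<in>L. axis_segment s" and rc: "rectangular_cell L C"
    and "horiz a c" "horiz b c'" "horiz e d" "a \<noteq> b" "a \<noteq> e" "b \<noteq> e"
    and m: "a \<in> bounding_segments L C" "b \<in> bounding_segments L C" "e \<in> bounding_segments L C"
  shows False
proof -
  obtain x1 x2 y1 y2 v1 v2 h1 h2 where r: "bounding_segments L C = {v1,v2,h1,h2}"
     "vert v1 x1" "vert v2 x2"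
    using rect_box[OF fin ax rc] by (elim exE conjE) (rule that; assumption)
  have "a \<noteq> v1" "a \<noteq> v2" "b \<noteq> v1" "b \<noteq> v2" "e \<noteq> v1" "e \<noteq> v2"
    using vert_not_horiz[OF r(2)] vert_not_horiz[OF r(3)] assms(4-6) by blast+
  thus False using m r(1) assms(7-9) by auto
qed

lemma boxes_meet:
  assumes "max a a' < min b b'" "max c c' < min d d'"
  shows "{p::point. a < fst p \<and> fst p < b \<and> c < snd p \<and> snd p < d} \<inter>
         {p. a' < fst p \<and> fst p < b' \<and> c' < snd p \<and> snd p < d'} \<noteq> {}"
proof -
  let ?q = "((max a a' + min b b')/2, (max c c' + min d d')/2)"
  have "?q \<in> {p::point. a < fst p \<and> fst p < b \<and> c < snd p \<and> snd p < d} \<inter>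
         {p. a' < fst p \<and> fst p < b' \<and> c' < snd p \<and> snd p < d'}"
    using assms by (auto simp: max_def min_def)
  thus ?thesis by blast
qed

lemma cells_disj:
  assumes "rectangular_cell L C" "rectangular_cell L C'" "C \<noteq> C'"
  shows "C \<inter> C' = {}"
  using assms components_nonoverlap unfolding rectangular_cell_def cells_def by blast

lemma pick2: fixes d :: real
  assumes "P1 \<or> Q1" "P2 \<or> Q2" "P3 \<or> Q3"
  shows "(P1 \<and> P2) \<or> (P1 \<and> P3) \<or> (P2 \<and> P3) \<or> (Q1 \<and> Q2) \<or> (Q1 \<and> Q3) \<or> (Q2 \<and> Q3)"
  using assms by blast

lemma final_h:
  assumes fin: "finite L" and ax: "\<forall>s\<in>L. axis_segment s"
    and rc: "rectangular_cell L C1" "rectangular_cell L C2" "rectangular_cell L C3"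
    and ne: "C1 \<noteq> C2" "C1 \<noteq> C3" "C2 \<noteq> C3"
    and a: "horiz a c" and b: "horiz b c'" and e: "vert e d" and ab: "a \<noteq> b"
    and m1: "a \<in> bounding_segments L C1" "b \<in> bounding_segments L C1" "e \<in> bounding_segments L C1"
    and m2: "a \<in> bounding_segments L C2" "b \<in> bounding_segments L C2" "e \<in> bounding_segments L C2"
    and m3: "a \<in> bounding_segments L C3" "b \<in> bounding_segments L C3" "e \<in> bounding_segments L C3"
  shows False
proof -
  have cc: "c \<noteq> c'"
  proof
    assume "c = c'"
    obtain x1 x2 where "x1 < x2" "C1 = {p. x1 < fst p \<and> fst p < x2 \<and> min c c' < snd p \<and> snd p < max c c'}"
      using tri_h[OF fin ax rc(1) a b e ab m1] by blast
    moreover have "C1 \<noteq> {}" using rc(1) in_components_nonempty unfolding rectangular_cell_def cells_def by blast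
    ultimately show False using \<open>c = c'\<close> by auto
  qed
  hence cm: "min c c' < max c c'" by (auto simp: min_def max_def)
  obtain p1 q1 where 1: "p1 < q1" "p1 = d \<or> q1 = d" "C1 = {p. p1 < fst p \<and> fst p < q1 \<and> min c c' < snd p \<and> snd p < max c c'}"
    using tri_h[OF fin ax rc(1) a b e ab m1] by blast
  obtain p2 q2 where 2: "p2 < q2" "p2 = d \<or> q2 = d" "C2 = {p. p2 < fst p \<and> fst p < q2 \<and> min c c' < snd p \<and> snd p < max c c'}"
    using tri_h[OF fin ax rc(2) a b e ab m2] by blast
  obtain p3 q3 where 3: "p3 < q3" "p3 = d \<or> q3 = d" "C3 = {p. p3 < fst p \<and> fst p < q3 \<and> min c c' < snd p \<and> snd p < max c c'}"
    using tri_h[OF fin ax rc(3) a b e ab m3] by blast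
  have d12: "C1 \<inter> C2 = {}" and d13: "C1 \<inter> C3 = {}" and d23: "C2 \<inter> C3 = {}"
    using cells_disj rc ne by blast+
  have mm: "max (min c c') (min c c') < min (max c c') (max c c')" using cm by simp
  from pick2[OF 1(2) 2(2) 3(2)] show False
  proof (elim disjE conjE)
    assume "p1 = d" "p2 = d"
    thus False using boxes_meet[OF _ mm, of p1 p2 q1 q2] 1 2 d12 by (auto simp: max_def min_def)
  next
    assume "p1 = d" "p3 = d"
    thus False using boxes_meet[OF _ mm, of p1 p3 q1 q3] 1 3 d13 by (auto simp: max_def min_def)
  next
    assume "p2 = d" "p3 = d"
    thus False using boxes_meet[OF _ mm, of p2 p3 q2 q3] 2 3 d23 by (auto simp: max_def min_def)
  next
    assume "q1 = d" "q2 = d"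
    thus False using boxes_meet[OF _ mm, of p1 p2 q1 q2] 1 2 d12 by (auto simp: max_def min_def)
  next
    assume "q1 = d" "q3 = d"
    thus False using boxes_meet[OF _ mm, of p1 p3 q1 q3] 1 3 d13 by (auto simp: max_def min_def)
  next
    assume "q2 = d" "q3 = d"
    thus False using boxes_meet[OF _ mm, of p2 p3 q2 q3] 2 3 d23 by (auto simp: max_def min_def)
  qed
qed

lemma final_v:
  assumes fin: "finite L" and ax: "\<forall>s\<in>L. axis_segment s"
    and rc: "rectangular_cell L C1" "rectangular_cell L C2" "rectangular_cell L C3"
    and ne: "C1 \<noteq> C2" "C1 \<noteq> C3" "C2 \<noteq> C3"
    and a: "vert a c" and b: "vert b c'" and e: "horiz e d" and ab: "a \<noteq> b"
    and m1: "a \<in> bounding_segments L C1" "b \<in> bounding_segments L C1" "e \<in> bounding_segments L C1"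
    and m2: "a \<in> bounding_segments L C2" "b \<in> bounding_segments L C2" "e \<in> bounding_segments L C2"
    and m3: "a \<in> bounding_segments L C3" "b \<in> bounding_segments L C3" "e \<in> bounding_segments L C3"
  shows False
proof -
  have cc: "c \<noteq> c'"
  proof
    assume "c = c'"
    obtain x1 x2 where "x1 < x2" "C1 = {p. min c c' < fst p \<and> fst p < max c c' \<and> x1 < snd p \<and> snd p < x2}"
      using tri_v[OF fin ax rc(1) a b e ab m1] by blast
    moreover have "C1 \<noteq> {}" using rc(1) in_components_nonempty unfolding rectangular_cell_def cells_def by blast
    ultimately show False using \<open>c = c'\<close> by auto
  qed
  hence cm: "min c c' < max c c'" by (auto simp: min_def max_def)
  obtain p1 q1 where 1: "p1 < q1" "p1 = d \<or> q1 = d" "C1 = {p. min c c' < fst p \<and> fst p < max c c' \<and> p1 < snd p \<and> snd p < q1}"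
    using tri_v[OF fin ax rc(1) a b e ab m1] by blast
  obtain p2 q2 where 2: "p2 < q2" "p2 = d \<or> q2 = d" "C2 = {p. min c c' < fst p \<and> fst p < max c c' \<and> p2 < snd p \<and> snd p < q2}"
    using tri_v[OF fin ax rc(2) a b e ab m2] by blast
  obtain p3 q3 where 3: "p3 < q3" "p3 = d \<or> q3 = d" "C3 = {p. min c c' < fst p \<and> fst p < max c c' \<and> p3 < snd p \<and> snd p < q3}"
    using tri_v[OF fin ax rc(3) a b e ab m3] by blast
  have d12: "C1 \<inter> C2 = {}" and d13: "C1 \<inter> C3 = {}" and d23: "C2 \<inter> C3 = {}"
    using cells_disj rc ne by blast+
  have mm: "max (min c c') (min c c') < min (max c c') (max c c')" using cm by simp
  from pick2[OF 1(2) 2(2) 3(2)] show False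
  proof (elim disjE conjE)
    assume "p1 = d" "p2 = d"
    thus False using boxes_meet[OF mm, of p1 p2 q1 q2] 1 2 d12 by (auto simp: max_def min_def)
  next
    assume "p1 = d" "p3 = d"
    thus False using boxes_meet[OF mm, of p1 p3 q1 q3] 1 3 d13 by (auto simp: max_def min_def)
  next
    assume "p2 = d" "p3 = d"
    thus False using boxes_meet[OF mm, of p2 p3 q2 q3] 2 3 d23 by (auto simp: max_def min_def)
  next
    assume "q1 = d" "q2 = d"
    thus False using boxes_meet[OF mm, of p1 p2 q1 q2] 1 2 d12 by (auto simp: max_def min_def)
  next
    assume "q1 = d" "q3 = d"
    thus False using boxes_meet[OF mm, of p1 p3 q1 q3] 1 3 d13 by (auto simp: max_def min_def)
  next
    assume "q2 = d" "q3 = d"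
    thus False using boxes_meet[OF mm, of p2 p3 q2 q3] 2 3 d23 by (auto simp: max_def min_def)
  qed
qed

theorem lemma2:
  fixes L :: "point set set" and l l' l'' :: "point set"
  assumes "finite L"
    and "\<forall>s\<in>L. axis_segment s"
    and "l \<in> L" and "l' \<in> L" and "l'' \<in> L"
    and "l \<noteq> l'" and "l \<noteq> l''" and "l' \<noteq> l''"
  shows "card {S \<in> assoc_subsets L. {l, l', l''} \<subseteq> S} \<le> 2"
proof (rule ccontr)
  note fin = assms(1) and ax = assms(2)
  let ?A = "{S \<in> assoc_subsets L. {l, l', l''} \<subseteq> S}"
  assume "\<not> card ?A \<le> 2"
  hence "3 \<le> card ?A" by simp
  then obtain T where T: "T \<subseteq> ?A" "card T = 3" by (rule obtain_subset_with_card_n)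
  then obtain S1 S2 S3 where S: "T = {S1,S2,S3}" "S1 \<noteq> S2" "S2 \<noteq> S3" "S1 \<noteq> S3"
    unfolding card_3_iff by blast
  have "S1 \<in> ?A" "S2 \<in> ?A" "S3 \<in> ?A" using S T by auto
  then obtain C1 C2 C3 where C: "S1 = bounding_segments L C1" "rectangular_cell L C1"
    "S2 = bounding_segments L C2" "rectangular_cell L C2"
    "S3 = bounding_segments L C3" "rectangular_cell L C3"
    and m: "{l,l',l''} \<subseteq> S1" "{l,l',l''} \<subseteq> S2" "{l,l',l''} \<subseteq> S3"
    unfolding assoc_subsets_def by blast
  have ne: "C1 \<noteq> C2" "C1 \<noteq> C3" "C2 \<noteq> C3" using S C by auto
  have FH: False if "horiz a c" "horiz b c'" "vert e d" "a \<noteq> b" "a \<in> {l,l',l''}" "b \<in> {l,l',l''}"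
    "e \<in> {l,l',l''}" for a b e c c' d
    using final_h[OF fin ax C(2,4,6) ne that(1-4)] m C(1,3,5) that(5-7) by blast
  have FV: False if "vert a c" "vert b c'" "horiz e d" "a \<noteq> b" "a \<in> {l,l',l''}" "b \<in> {l,l',l''}"
    "e \<in> {l,l',l''}" for a b e c c' d
    using final_v[OF fin ax C(2,4,6) ne that(1-4)] m C(1,3,5) that(5-7) by blast
  have NV: False if "vert l c" "vert l' c'" "vert l'' d" for c c' d
    using no3_v[OF fin ax C(2) that assms(6-8)] m C(1) by blast
  have NH: False if "horiz l c" "horiz l' c'" "horiz l'' d" for c c' d
    using no3_h[OF fin ax C(2) that assms(6-8)] m C(1) by blast
  have o: "(\<exists>x. vert l x) \<or> (\<exists>y. horiz l y)" "(\<exists>x. vert l' x) \<or> (\<exists>y. horiz l' y)"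
    "(\<exists>x. vert l'' x) \<or> (\<exists>y. horiz l'' y)" using axis_cases ax assms(3-5) by blast+
  from o show False
  proof (elim disjE exE)
    fix x x' x'' assume "vert l x" "vert l' x'" "vert l'' x''" thus False using NV by blast
  next
    fix x x' y assume "vert l x" "vert l' x'" "horiz l'' y" thus False using FV[of l x l' x' l'' y] assms(6) by blast
  next
    fix x y x' assume "vert l x" "horiz l' y" "vert l'' x'" thus False using FV[of l x l'' x' l' y] assms(7) by blast
  next
    fix x y y' assume "vert l x" "horiz l' y" "horiz l'' y'" thus False using FH[of l' y l'' y' l x] assms(8) by blast
  next
    fix y x x' assume "horiz l y" "vert l' x" "vert l'' x'" thus False using FV[of l' x l'' x' l y] assms(8) by blast
  next
    fix y x y' assume "horiz l y" "vert l' x" "horiz l'' y'" thus False using FH[of l y l'' y' l' x] assms(7) by blast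
  next
    fix y y' x assume "horiz l y" "horiz l' y'" "vert l'' x" thus False using FH[of l y l' y' l'' x] assms(6) by blast
  next
    fix y y' y'' assume "horiz l y" "horiz l' y'" "horiz l'' y''" thus False using NH by blast
  qed
qed

end
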